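(* Let $G=(V,E)$ be a finite simple connected graph with $n$ vertices, $\omega\colon V\to(0,\infty)$ a weight function with $\omega=\omega(V)$, $\delta>0$, and $s=\frac{8\ln n}{\delta^2}$. Let $S=\{m_1,\dots,m_s\}$ be a random multiset of $s$ vertices drawn independently with $\Pr(m_i=v)=\omega(v)/\omega$. Then for any vertex $v$, with probability at least $1-n^{-3}$, \[\frac{\Lambda(v)}{\omega}\le\frac{\Lambda^{*}(v)}{s}+\frac{\delta}{2}.\]
   Context: For vertices $q,v$, a vertex $u$ is consistent with $(q,v)$ if $q=v=u$, or $q\ne v$ and $v$ lies on a shortest path between $u$ and $q$; $N(q,v)$ is the set of such $u$. $N(v)$ is the neighbor set of $v$. $\omega(X)=\sum_{u\in X}\omega(u)$. $\Lambda(v)=\max_{u\in N(v)}\omega(N(v,u))$ and $\Lambda^{*}(v)=\max_{u\in N(v)}|S\cap N(v,u)|$, where $S\cap X$ is the multiset $\{m_i: m_i\in X\}$ (counted with multiplicity). *)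

theory Defs
  imports "HOL-Probability.Probability" "HOL-Library.Multiset"
begin

definition simple_graph :: "'a set \<Rightarrow> ('a \<Rightarrow> 'a \<Rightarrow> bool) \<Rightarrow> bool" where
  "simple_graph V E \<longleftrightarrow> finite V \<and> (\<forall>x y. E x y \<longrightarrow> x \<in> V \<and> y \<in> V)
     \<and> (\<forall>x y. E x y \<longrightarrow> E y x) \<and> (\<forall>x. \<not> E x x)"

definition is_walk :: "'a set \<Rightarrow> ('a \<Rightarrow> 'a \<Rightarrow> bool) \<Rightarrow> 'a list \<Rightarrow> bool" where
  "is_walk V E xs \<longleftrightarrow> xs \<noteq> [] \<and> set xs \<subseteq> V \<and> (\<forall>i. Suc i < length xs \<longrightarrow> E (xs ! i) (xs ! Suc i))"

definition connected_graph :: "'a set \<Rightarrow> ('a \<Rightarrow> 'a \<Rightarrow> bool) \<Rightarrow> bool" where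
  "connected_graph V E \<longleftrightarrow> (\<forall>u\<in>V. \<forall>v\<in>V. \<exists>xs. is_walk V E xs \<and> hd xs = u \<and> last xs = v)"

definition gdist :: "'a set \<Rightarrow> ('a \<Rightarrow> 'a \<Rightarrow> bool) \<Rightarrow> 'a \<Rightarrow> 'a \<Rightarrow> nat" where
  "gdist V E u v = (LEAST k. \<exists>xs. is_walk V E xs \<and> hd xs = u \<and> last xs = v \<and> length xs = Suc k)"

definition nbrs :: "'a set \<Rightarrow> ('a \<Rightarrow> 'a \<Rightarrow> bool) \<Rightarrow> 'a \<Rightarrow> 'a set" where
  "nbrs V E v = {u \<in> V. E v u}"

definition consistent_set :: "'a set \<Rightarrow> ('a \<Rightarrow> 'a \<Rightarrow> bool) \<Rightarrow> 'a \<Rightarrow> 'a \<Rightarrow> 'a set" where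
  "consistent_set V E q v = {u \<in> V. (q = v \<and> v = u) \<or>
      (q \<noteq> v \<and> gdist V E u q = gdist V E u v + gdist V E v q)}"

definition Lambda :: "'a set \<Rightarrow> ('a \<Rightarrow> 'a \<Rightarrow> bool) \<Rightarrow> ('a \<Rightarrow> real) \<Rightarrow> 'a \<Rightarrow> real" where
  "Lambda V E w v = Max ((\<lambda>u. sum w (consistent_set V E v u)) ` nbrs V E v)"

definition LambdaStar :: "'a set \<Rightarrow> ('a \<Rightarrow> 'a \<Rightarrow> bool) \<Rightarrow> 'a multiset \<Rightarrow> 'a \<Rightarrow> nat" where
  "LambdaStar V E S v = Max ((\<lambda>u. size (filter_mset (\<lambda>m. m \<in> consistent_set V E v u) S)) ` nbrs V E v)"

end

theory Submission
  imports Defs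
begin

lemma map_bern: "map_pmf (\<lambda>x. x \<in> A) D = bernoulli_pmf (measure_pmf.prob D A)"
proof (rule pmf_eqI)
  fix b :: bool
  have p: "0 \<le> measure_pmf.prob D A" "measure_pmf.prob D A \<le> 1" by auto
  show "pmf (map_pmf (\<lambda>x. x \<in> A) D) b = pmf (bernoulli_pmf (measure_pmf.prob D A)) b"
  proof (cases b)
    case True
    then show ?thesis using p by (simp add: pmf_map vimage_def)
  next
    case False
    have "measure_pmf.prob D {x. x \<notin> A} = 1 - measure_pmf.prob D A"
      using measure_pmf.prob_compl[of A D] by (simp add: Compl_eq_Diff_UNIV[symmetric] Collect_neg_eq)
    then show ?thesis using p False by (simp add: pmf_map vimage_def)
  qed
qed

lemma count_binomial:
  "map_pmf (\<lambda>ms. length (filter (\<lambda>x. x \<in> A) ms)) (replicate_pmf n D) = binomial_pmf n (measure_pmf.prob D A)"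
proof (induction n)
  case 0
  then show ?case by (simp add: binomial_pmf_0)
next
  case (Suc n)
  have p: "measure_pmf.prob D A \<in> {0..1}" by auto
  have "map_pmf (\<lambda>ms. length (filter (\<lambda>x. x \<in> A) ms)) (replicate_pmf (Suc n) D)
     = bind_pmf D (\<lambda>x. bind_pmf (map_pmf (\<lambda>ms. length (filter (\<lambda>x. x \<in> A) ms)) (replicate_pmf n D))
          (\<lambda>k. return_pmf ((if x \<in> A then 1 else 0) + k)))"
    by (auto simp: map_pmf_def bind_assoc_pmf bind_return_pmf intro!: bind_pmf_cong)
  also have "\<dots> = bind_pmf (map_pmf (\<lambda>x. x \<in> A) D) (\<lambda>b. bind_pmf (binomial_pmf n (measure_pmf.prob D A))
          (\<lambda>k. return_pmf ((if b then 1 else 0) + k)))"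
    by (simp add: Suc bind_map_pmf)
  also have "\<dots> = binomial_pmf (Suc n) (measure_pmf.prob D A)"
    by (simp add: map_bern binomial_pmf_Suc[OF p])
  finally show ?case .
qed

theorem lemma12:
  fixes V :: "'a set" and E :: "'a \<Rightarrow> 'a \<Rightarrow> bool" and w :: "'a \<Rightarrow> real"
    and D :: "'a pmf" and \<delta> :: real and s :: nat and v :: 'a
  assumes "simple_graph V E" and "connected_graph V E"
    and "\<forall>u\<in>V. w u > 0"
    and "\<delta> > 0"
    and "s = nat \<lceil>8 * ln (real (card V)) / \<delta>^2\<rceil>"
    and "\<forall>u\<in>V. pmf D u = w u / sum w V"
    and "v \<in> V"
  shows "measure_pmf.prob (replicate_pmf s D)
           {ms. Lambda V E w v / sum w V \<le> real (LambdaStar V E (mset ms) v) / real s + \<delta> / 2}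
         \<ge> 1 - 1 / real (card V) ^ 3"
proof -
  let ?n = "card V"
  have finV: "finite V" using assms(1) unfolding simple_graph_def by auto
  have n1: "?n \<ge> 1" using finV assms(7) by (metis One_nat_def Suc_leI card_gt_0_iff empty_iff)
  show ?thesis
  proof (cases "?n = 1")
    case True
    then show ?thesis by simp
  next
    case False
    with n1 have n2: "?n \<ge> 2" by simp
    obtain u1 where u1: "u1 \<in> V" "u1 \<noteq> v"
    proof -
      have "\<not> V \<subseteq> {v}"
      proof
        assume "V \<subseteq> {v}"
        hence "card V \<le> card {v}" by (intro card_mono) auto
        thus False using n2 by simp
      qed
      then show ?thesis using that by blast
    qed
    obtain xs where xs: "is_walk V E xs" "hd xs = v" "last xs = u1"
      using assms(2) u1 assms(7) unfolding connected_graph_def by blast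
    have len: "length xs \<ge> 2"
    proof (rule ccontr)
      assume "\<not> length xs \<ge> 2"
      moreover have "xs \<noteq> []" using xs(1) unfolding is_walk_def by auto
      ultimately obtain a where "xs = [a]" by (cases xs) (auto simp: Suc_le_eq)
      then show False using xs u1 by simp
    qed
    have ne: "xs \<noteq> []" using xs(1) unfolding is_walk_def by auto
    have "E (xs ! 0) (xs ! Suc 0)" using xs(1) len unfolding is_walk_def by auto
    moreover have "xs ! 0 = v" using xs(2) ne by (simp add: hd_conv_nth)
    ultimately have e: "E v (xs ! 1)" by simp
    have "xs ! 1 \<in> nbrs V E v" using e assms(1) unfolding nbrs_def simple_graph_def by auto
    hence nbne: "nbrs V E v \<noteq> {}" by auto
    have finN: "finite (nbrs V E v)" using finV unfolding nbrs_def by auto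
    define f where "f = (\<lambda>u. sum w (consistent_set V E v u))"
    obtain u0 where u0: "u0 \<in> nbrs V E v" "Lambda V E w v = f u0"
    proof -
      have "Max (f ` nbrs V E v) \<in> f ` nbrs V E v" using finN nbne by (intro Max_in) auto
      then obtain u where "u \<in> nbrs V E v" "Max (f ` nbrs V E v) = f u" by auto
      then show ?thesis using that unfolding Lambda_def f_def by auto
    qed
    define A where "A = consistent_set V E v u0"
    have AV: "A \<subseteq> V" unfolding A_def consistent_set_def by auto
    have finA: "finite A" using AV finV finite_subset by auto
    define p where "p = measure_pmf.prob D A"
    have pA: "p = sum w A / sum w V"
      unfolding p_def using measure_measure_pmf_finite[OF finA, of D] AV assms(6)
      by (simp add: sum_divide_distrib subset_iff)
    have Lp: "Lambda V E w v / sum w V = p" using u0 pA unfolding f_def A_def by simp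
    define cnt where "cnt = (\<lambda>ms. length (filter (\<lambda>x. x \<in> A) ms))"
    have LS: "cnt ms \<le> LambdaStar V E (mset ms) v" for ms
    proof -
      have "cnt ms = size (filter_mset (\<lambda>m. m \<in> consistent_set V E v u0) (mset ms))"
        unfolding cnt_def A_def by (metis mset_filter size_mset)
      then show ?thesis unfolding LambdaStar_def using finN u0(1) by (auto intro!: Max_ge)
    qed
    have lnpos: "ln (real ?n) > 0" using n2 by simp
    have sge: "real s \<ge> 8 * ln (real ?n) / \<delta>^2" using assms(5) by linarith
    have "8 * ln (real ?n) / \<delta>^2 > 0" using lnpos assms(4) by simp
    hence "real s > 0" using sge by linarith
    hence spos: "s > 0" by simp
    have sub: "{ms. \<not> (real (cnt ms) / real s \<le> p - \<delta>/2)} \<subseteq>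
       {ms. Lambda V E w v / sum w V \<le> real (LambdaStar V E (mset ms) v) / real s + \<delta> / 2}"
    proof
      fix ms assume "ms \<in> {ms. \<not> (real (cnt ms) / real s \<le> p - \<delta>/2)}"
      hence h: "p < real (cnt ms) / real s + \<delta>/2" by simp
      have "real (cnt ms) / real s \<le> real (LambdaStar V E (mset ms) v) / real s"
        using LS[of ms] spos by (simp add: divide_right_mono)
      then show "ms \<in> {ms. Lambda V E w v / sum w V \<le> real (LambdaStar V E (mset ms) v) / real s + \<delta> / 2}"
        using h Lp by simp
    qed
    have bd: "measure_pmf.prob (replicate_pmf s D) {ms. real (cnt ms) / real s \<le> p - \<delta>/2}
          = measure_pmf.prob (binomial_pmf s p) {x. real x / real s \<le> p - \<delta>/2}"
      unfolding p_def count_binomial[symmetric] cnt_def by (simp add: vimage_def)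
    have "measure_pmf.prob (binomial_pmf s p) {x. real x / real s \<le> p - \<delta>/2} \<le> exp (-2 * real s * (\<delta>/2)\<^sup>2)"
    proof -
      have bdp: "binomial_distribution p" unfolding binomial_distribution_def p_def by auto
      show ?thesis using binomial_distribution.prob_le'[OF bdp spos, of "\<delta>/2"] assms(4) by simp
    qed
    also have "\<dots> \<le> exp (- 4 * ln (real ?n))"
    proof -
      have "real s * \<delta>^2 \<ge> 8 * ln (real ?n)" using sge assms(4) by (simp add: field_simps)
      then show ?thesis by (simp add: power2_eq_square field_simps)
    qed
    also have "\<dots> = 1 / real ?n ^ 4"
    proof -
      have xp: "real ?n > 0" using n2 by simp
      have "exp (4 * ln (real ?n)) = real ?n ^ 4"
        using ln_realpow[of "real ?n" 4] exp_ln[of "real ?n ^ 4"] xp by simp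
      then show ?thesis by (simp add: exp_minus inverse_eq_divide)
    qed
    also have "\<dots> \<le> 1 / real ?n ^ 3"
      using n2 by (intro divide_left_mono power_increasing) auto
    finally have tail: "measure_pmf.prob (replicate_pmf s D) {ms. real (cnt ms) / real s \<le> p - \<delta>/2} \<le> 1 / real ?n ^ 3"
      using bd by simp
    have "measure_pmf.prob (replicate_pmf s D) {ms. \<not> (real (cnt ms) / real s \<le> p - \<delta>/2)}
        = 1 - measure_pmf.prob (replicate_pmf s D) {ms. real (cnt ms) / real s \<le> p - \<delta>/2}"
      using measure_pmf.prob_compl[of "{ms. real (cnt ms) / real s \<le> p - \<delta>/2}" "replicate_pmf s D"]
      by (simp add: Compl_eq_Diff_UNIV[symmetric] Collect_neg_eq)
    moreover have "measure_pmf.prob (replicate_pmf s D) {ms. \<not> (real (cnt ms) / real s \<le> p - \<delta>/2)}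
        \<le> measure_pmf.prob (replicate_pmf s D) {ms. Lambda V E w v / sum w V \<le> real (LambdaStar V E (mset ms) v) / real s + \<delta> / 2}"
      using sub by (intro measure_pmf.finite_measure_mono) auto
    ultimately show ?thesis using tail by linarith
  qed
qed

end
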